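(* Suppose $l$ is $(M,m)$-(restricted smooth, restricted strongly concave) on $\Omega_{2k}$. Then for all subsets $\mathsf{S},\mathsf{T}\subseteq[n]$ of size at most $k$, $$\frac{M}{m}f_{\mathsf{S}}(\mathsf{T})\ \ge\ \sum_{j\in\mathsf{T}}f_{\mathsf{S}}(j)\ \ge\ \frac{m}{M}f_{\mathsf{S}}(\mathsf{T}).$$
   Context: $\Omega_r=\{(\mathbf{x},\mathbf{y})\in\mathbb{R}^n\times\mathbb{R}^n:\|\mathbf{x}\|_0\le r,\|\mathbf{y}\|_0\le r,\|\mathbf{x}-\mathbf{y}\|_0\le r\}$. A differentiable $l:\mathbb{R}^n\to\mathbb{R}$ is $(M,m)$-(restricted smooth, restricted strongly concave) on $\Omega_r$ if for all $(\mathbf{x},\mathbf{y})\in\Omega_r$: $-\tfrac{m}{2}\|\mathbf{y}-\mathbf{x}\|_2^2\ge l(\mathbf{y})-l(\mathbf{x})-\langle\nabla l(\mathbf{x}),\mathbf{y}-\mathbf{x}\rangle\ge -\tfrac{M}{2}\|\mathbf{y}-\mathbf{x}\|_2^2$, with $m,M>0$. For $\mathsf{S}\subseteq[n]$, $\boldsymbol\beta^{(\mathsf{S})}$ is a maximizer of $l$ over vectors supported in $\mathsf{S}$, $f(\mathsf{S})=l(\boldsymbol\beta^{(\mathsf{S})})-l(\mathbf{0})$, $f_{\mathsf{S}}(\mathsf{T})=f(\mathsf{S}\cup\mathsf{T})-f(\mathsf{S})$ and $f_{\mathsf{S}}(j)=f_{\mathsf{S}}(\{j\})$. *)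

theory Defs
  imports "HOL-Analysis.Analysis"
begin

text \<open>Vectors in R^n are modelled as real ^ 'n; the index set [n] is UNIV :: 'n set.\<close>

definition supp :: "real ^ 'n \<Rightarrow> 'n set" where
  "supp x = {i. x $ i \<noteq> 0}"

definition l0norm :: "real ^ 'n \<Rightarrow> nat" where
  "l0norm x = card (supp x)"

definition Omega :: "nat \<Rightarrow> ((real ^ 'n) \<times> (real ^ 'n)) set" where
  "Omega r = {(x, y). l0norm x \<le> r \<and> l0norm y \<le> r \<and> l0norm (x - y) \<le> r}"

text \<open>Inner product of the gradient of l at x with v is the Frechet derivative of l at x applied to v.\<close>
definition RSM_RSC :: "real \<Rightarrow> real \<Rightarrow> (real ^ 'n \<Rightarrow> real) \<Rightarrow> nat \<Rightarrow> bool" where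
  "RSM_RSC M m l r \<longleftrightarrow> m > 0 \<and> M > 0 \<and> (\<forall>x. l differentiable (at x)) \<and>
     (\<forall>(x, y) \<in> Omega r.
        - (m / 2) * (norm (y - x))\<^sup>2 \<ge> l y - l x - frechet_derivative l (at x) (y - x) \<and>
        l y - l x - frechet_derivative l (at x) (y - x) \<ge> - (M / 2) * (norm (y - x))\<^sup>2)"

definition beta :: "(real ^ 'n \<Rightarrow> real) \<Rightarrow> 'n set \<Rightarrow> real ^ 'n" where
  "beta l S = (SOME b. supp b \<subseteq> S \<and> (\<forall>z. supp z \<subseteq> S \<longrightarrow> l z \<le> l b))"

definition fset :: "(real ^ 'n \<Rightarrow> real) \<Rightarrow> 'n set \<Rightarrow> real" where
  "fset l S = l (beta l S) - l 0"

definition fmarg :: "(real ^ 'n \<Rightarrow> real) \<Rightarrow> 'n set \<Rightarrow> 'n set \<Rightarrow> real" where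
  "fmarg l S T = fset l (S \<union> T) - fset l S"

end

theory Submission imports Defs begin

lemma supp_sub_card:
  fixes x :: "real ^ 'n"
  assumes "supp x \<subseteq> L" shows "l0norm x \<le> card L"
  unfolding l0norm_def using assms by (simp add: card_mono)

lemma Omega_mem:
  fixes x y :: "real ^ 'n"
  assumes "supp x \<subseteq> L" "supp y \<subseteq> L" "card L \<le> r"
  shows "(x, y) \<in> Omega r"
proof -
  have "supp (x - y) \<subseteq> L" using assms(1,2) unfolding supp_def
    by (smt (verit) mem_Collect_eq subset_iff vector_minus_component)
  thus ?thesis using assms supp_sub_card[of x L] supp_sub_card[of y L] supp_sub_card[of "x-y" L]
    unfolding Omega_def by auto
qed

lemma lin_expand:
  fixes f :: "real ^ 'n \<Rightarrow> real"
  assumes "linear f"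
  shows "f x = (\<Sum>i\<in>UNIV. x$i * f (axis i 1))"
proof -
  have "f x = f (\<Sum>i\<in>UNIV. x$i *\<^sub>R axis i 1)"
    using basis_expansion[of x] by (simp add: scalar_mult_eq_scaleR)
  also have "\<dots> = (\<Sum>i\<in>UNIV. x$i * f (axis i 1))"
    using assms by (simp add: linear_sum linear_scale)
  finally show ?thesis .
qed

lemma norm_sq_sum:
  fixes x :: "real ^ 'n"
  shows "(norm x)^2 = (\<Sum>i\<in>UNIV. (x$i)^2)"
proof -
  have "inner x x = (norm x)^2" by (rule dot_square_norm)
  thus ?thesis by (simp add: inner_vec_def power2_eq_square)
qed

lemma supp_axis: "supp (t *\<^sub>R axis i (1::real) :: real ^ 'n) \<subseteq> {i}"
  unfolding supp_def axis_def by auto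

lemma supp_zero[simp]: "supp (0::real^'n) = {}" unfolding supp_def by simp

lemma closed_supp: "closed {z::real^'n. supp z \<subseteq> L}"
proof -
  have "{z::real^'n. supp z \<subseteq> L} = (\<Inter>i\<in>-L. {z. z$i = 0})"
    unfolding supp_def by auto
  moreover have "closed (\<Inter>i\<in>-L. {z::real^'n. z$i = 0})"
    by (intro closed_INT ballI closed_Collect_eq continuous_intros)
  ultimately show ?thesis by simp
qed

lemma exists_max:
  fixes l :: "real ^ 'n \<Rightarrow> real"
  assumes "RSM_RSC M m l r" "card L \<le> r"
  shows "\<exists>b. supp b \<subseteq> L \<and> (\<forall>z. supp z \<subseteq> L \<longrightarrow> l z \<le> l b)"
proof -
  have m: "m > 0" and dif: "\<forall>x. l differentiable (at x)"
    and ineq: "\<forall>(x, y) \<in> Omega r.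
        - (m / 2) * (norm (y - x))\<^sup>2 \<ge> l y - l x - frechet_derivative l (at x) (y - x)"
    using assms(1) unfolding RSM_RSC_def by auto
  define D0 where "D0 = frechet_derivative l (at 0)"
  have "(l has_derivative D0) (at 0)" using dif frechet_derivative_works D0_def by blast
  hence "bounded_linear D0" by (rule has_derivative_bounded_linear)
  then obtain K where K: "K > 0" "\<And>x. norm (D0 x) \<le> norm x * K"
    using bounded_linear.pos_bounded by blast
  have up: "l z \<le> l 0 + norm z * K - m/2 * (norm z)^2" if "supp z \<subseteq> L" for z
  proof -
    have "(0, z) \<in> Omega r" using Omega_mem[of 0 L z r] that assms(2) by simp
    hence "- (m / 2) * (norm z)\<^sup>2 \<ge> l z - l 0 - D0 z" using ineq D0_def by fastforce
    moreover have "D0 z \<le> norm z * K" using K(2)[of z] by simp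
    ultimately show ?thesis by linarith
  qed
  define R where "R = 2*K/m"
  have R: "R \<ge> 0" using K m R_def by simp
  define C where "C = {z. supp z \<subseteq> L} \<inter> cball 0 R"
  have "compact C" unfolding C_def by (intro closed_Int_compact closed_supp compact_cball)
  moreover have "0 \<in> C" using R unfolding C_def by simp
  hence "C \<noteq> {}" by blast
  moreover have "continuous_on C l"
    using dif by (meson continuous_at_imp_continuous_on differentiable_imp_continuous_within)
  ultimately obtain b where b: "b \<in> C" "\<And>y. y \<in> C \<Longrightarrow> l y \<le> l b"
    using continuous_attains_sup by metis
  have l0: "l 0 \<le> l b" using b(2)[of 0] R unfolding C_def by simp
  show ?thesis
  proof (intro exI conjI allI impI)
    show "supp b \<subseteq> L" using b(1) C_def by simp
  next
    fix z :: "real^'n" assume z: "supp z \<subseteq> L"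
    show "l z \<le> l b"
    proof (cases "norm z \<le> R")
      case True thus ?thesis using z b(2) C_def by simp
    next
      case False
      hence "m/2 * norm z > K" using m R_def by (simp add: field_simps)
      hence "m/2 * norm z * norm z > K * norm z" using False R
        by (intro mult_strict_right_mono) auto
      hence "norm z * K - m/2 * (norm z)^2 < 0" by (simp add: power2_eq_square algebra_simps)
      thus ?thesis using up[OF z] l0 by linarith
    qed
  qed
qed

lemma beta_prop:
  fixes l :: "real ^ 'n \<Rightarrow> real"
  assumes "RSM_RSC M m l r" "card L \<le> r"
  shows "supp (beta l L) \<subseteq> L \<and> (\<forall>z. supp z \<subseteq> L \<longrightarrow> l z \<le> l (beta l L))"
  unfolding beta_def using someI_ex[OF exists_max[OF assms]] .

lemma supp_add: "supp (x + y :: real^'n) \<subseteq> supp x \<union> supp y"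
  unfolding supp_def by auto

lemma sq_bound:
  fixes d g m :: real assumes "m > 0"
  shows "d * g - m/2 * d^2 \<le> g^2 / (2*m)"
proof -
  have "g^2/(2*m) - (d * g - m/2 * d^2) = (m*d - g)^2/(2*m)"
    using assms by (simp add: field_simps power2_eq_square)
  moreover have "(m*d - g)^2/(2*m) \<ge> 0" using assms by simp
  ultimately show ?thesis by linarith
qed

lemma grad_zero:
  fixes l :: "real ^ 'n \<Rightarrow> real"
  assumes "RSM_RSC M m l r" "card S \<le> r" "i \<in> S"
  shows "frechet_derivative l (at (beta l S)) (axis i 1) = 0"
proof -
  have M: "M > 0" and dif: "\<forall>x. l differentiable (at x)"
    and ineq: "\<forall>(x, y) \<in> Omega r.
        l y - l x - frechet_derivative l (at x) (y - x) \<ge> - (M / 2) * (norm (y - x))\<^sup>2"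
    using assms(1) unfolding RSM_RSC_def by auto
  define b where "b = beta l S"
  define D where "D = frechet_derivative l (at b)"
  have "(l has_derivative D) (at b)" using dif frechet_derivative_works D_def by blast
  hence lin: "linear D" using has_derivative_bounded_linear bounded_linear.linear by blast
  define g where "g = D (axis i 1)"
  define t where "t = g / M"
  define z where "z = b + t *\<^sub>R axis i 1"
  have bp: "supp b \<subseteq> S" "\<And>z. supp z \<subseteq> S \<Longrightarrow> l z \<le> l b"
    using beta_prop[OF assms(1,2)] b_def by auto
  have "supp z \<subseteq> S" using supp_add[of b "t *\<^sub>R axis i 1"] supp_axis[of t i] bp(1) assms(3)
    unfolding z_def by auto
  hence lz: "l z \<le> l b" using bp(2) by blast
  have "(b, z) \<in> Omega r" using Omega_mem[OF bp(1) \<open>supp z \<subseteq> S\<close> assms(2)] .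
  hence "l z - l b - D (z - b) \<ge> - (M / 2) * (norm (z - b))\<^sup>2" using ineq D_def by fastforce
  moreover have "D (z - b) = t * g" unfolding z_def g_def using lin by (simp add: linear_scale)
  moreover have "(norm (z - b))\<^sup>2 = t^2" unfolding z_def by simp
  ultimately have "l z - l b - t * g \<ge> - (M/2) * t^2" by simp
  hence "t * g \<le> M/2 * t^2" using lz by linarith
  hence "g^2 / M \<le> g^2 / (2*M)" unfolding t_def using M by (simp add: power2_eq_square field_simps)
  hence "g^2 \<le> 0" using M by (simp add: field_simps)
  thus ?thesis using g_def D_def b_def by simp
qed

lemma bounds:
  fixes l :: "real ^ 'n \<Rightarrow> real"
  assumes R: "RSM_RSC M m l r" and cS: "card S \<le> r" and cST: "card (S \<union> T) \<le> r"
  shows "(\<Sum>i\<in>T-S. (frechet_derivative l (at (beta l S)) (axis i 1))^2) / (2*M) \<le> fmarg l S T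
    \<and> fmarg l S T \<le> (\<Sum>i\<in>T-S. (frechet_derivative l (at (beta l S)) (axis i 1))^2) / (2*m)"
proof -
  have M: "M > 0" and m: "m > 0" and dif: "\<forall>x. l differentiable (at x)"
    and ineq: "\<forall>(x, y) \<in> Omega r.
        - (m / 2) * (norm (y - x))\<^sup>2 \<ge> l y - l x - frechet_derivative l (at x) (y - x) \<and>
        l y - l x - frechet_derivative l (at x) (y - x) \<ge> - (M / 2) * (norm (y - x))\<^sup>2"
    using R unfolding RSM_RSC_def by auto
  define b where "b = beta l S"
  define D where "D = frechet_derivative l (at b)"
  define g where "g i = D (axis i 1)" for i
  define A where "A = (\<Sum>i\<in>T-S. (g i)^2)"
  have "(l has_derivative D) (at b)" using dif frechet_derivative_works D_def by blast
  hence lin: "linear D" using has_derivative_bounded_linear bounded_linear.linear by blast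
  have g0: "g i = 0" if "i \<in> S" for i
    using grad_zero[OF R cS that] g_def D_def b_def by simp
  have bp: "supp b \<subseteq> S" "\<And>z. supp z \<subseteq> S \<Longrightarrow> l z \<le> l b"
    using beta_prop[OF R cS] b_def by auto
  define c where "c = beta l (S \<union> T)"
  have cp: "supp c \<subseteq> S \<union> T" "\<And>z. supp z \<subseteq> S \<union> T \<Longrightarrow> l z \<le> l c"
    using beta_prop[OF R cST] c_def by auto
  have fm: "fmarg l S T = l c - l b" unfolding fmarg_def fset_def b_def c_def by simp
  have bST: "supp b \<subseteq> S \<union> T" using bp(1) by auto
  define d where "d = c - b"
  have "(b, c) \<in> Omega r" using Omega_mem[OF bST cp(1) cST] .
  hence up1: "l c - l b - D d \<le> - (m / 2) * (norm d)\<^sup>2" using ineq D_def d_def by fastforce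
  have dz: "d$i = 0" if "i \<notin> S \<union> T" for i
  proof -
    have "i \<notin> supp b" "i \<notin> supp c" using that bST cp(1) by blast+
    hence "b$i = 0" "c$i = 0" unfolding supp_def by simp_all
    thus ?thesis unfolding d_def by simp
  qed
  have "D d = (\<Sum>i\<in>UNIV. d$i * g i)" unfolding g_def by (rule lin_expand[OF lin])
  also have "\<dots> = (\<Sum>i\<in>T-S. d$i * g i)"
  proof (rule sum.mono_neutral_right)
    show "\<forall>i\<in>UNIV - (T - S). d$i * g i = 0"
    proof
      fix i assume "i \<in> UNIV - (T - S)"
      hence "i \<in> S \<or> i \<notin> S \<union> T" by blast
      thus "d$i * g i = 0" using g0 dz by auto
    qed
  qed auto
  finally have Dd: "D d = (\<Sum>i\<in>T-S. d$i * g i)" .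
  have "(norm d)^2 = (\<Sum>i\<in>UNIV. (d$i)^2)" by (rule norm_sq_sum)
  also have "\<dots> \<ge> (\<Sum>i\<in>T-S. (d$i)^2)" by (rule sum_mono2) auto
  finally have nd: "(norm d)^2 \<ge> (\<Sum>i\<in>T-S. (d$i)^2)" .
  have "l c - l b \<le> D d - (m/2) * (norm d)^2" using up1 by linarith
  also have "\<dots> \<le> (\<Sum>i\<in>T-S. d$i * g i) - (m/2) * (\<Sum>i\<in>T-S. (d$i)^2)"
    using Dd nd m by simp
  also have "\<dots> = (\<Sum>i\<in>T-S. d$i * g i - m/2 * (d$i)^2)"
    by (simp add: sum_subtractf sum_distrib_left)
  also have "\<dots> \<le> (\<Sum>i\<in>T-S. (g i)^2 / (2*m))"
    by (rule sum_mono) (rule sq_bound[OF m])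
  also have "\<dots> = A / (2*m)" unfolding A_def by (simp add: sum_divide_distrib)
  finally have upper: "l c - l b \<le> A / (2*m)" .
  define w :: "real^'n" where "w = (\<chi> i. if i \<in> T - S then g i / M else 0)"
  define z where "z = b + w"
  have "w$i = 0" if "i \<notin> S \<union> T" for i using that by (simp add: w_def)
  hence "supp w \<subseteq> S \<union> T" unfolding supp_def by blast
  hence zs: "supp z \<subseteq> S \<union> T" using supp_add[of b w] bST unfolding z_def by auto
  have "(b, z) \<in> Omega r" using Omega_mem[OF bST zs cST] .
  hence lo1: "l z - l b - D w \<ge> - (M / 2) * (norm w)\<^sup>2" using ineq D_def z_def by fastforce
  have "D w = (\<Sum>i\<in>UNIV. w$i * g i)" unfolding g_def by (rule lin_expand[OF lin])
  also have "\<dots> = (\<Sum>i\<in>T-S. w$i * g i)"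
    by (rule sum.mono_neutral_right) (auto simp: w_def)
  also have "\<dots> = (\<Sum>i\<in>T-S. (g i)^2 / M)"
    by (rule sum.cong) (auto simp: w_def power2_eq_square)
  finally have Dw: "D w = A / M" unfolding A_def by (simp add: sum_divide_distrib)
  have "(norm w)^2 = (\<Sum>i\<in>UNIV. (w$i)^2)" by (rule norm_sq_sum)
  also have "\<dots> = (\<Sum>i\<in>T-S. (w$i)^2)"
    by (rule sum.mono_neutral_right) (auto simp: w_def)
  also have "\<dots> = (\<Sum>i\<in>T-S. (g i)^2 / M^2)"
    by (rule sum.cong) (auto simp: w_def power_divide)
  finally have nw: "(norm w)^2 = A / M^2" unfolding A_def by (simp add: sum_divide_distrib)
  have "l z - l b \<ge> A/M - (M/2) * (A / M^2)" using lo1 Dw nw by simp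
  moreover have "A/M - (M/2) * (A / M^2) = A / (2*M)" using M by (simp add: field_simps power2_eq_square)
  ultimately have "l z - l b \<ge> A / (2*M)" by simp
  hence lower: "l c - l b \<ge> A / (2*M)" using cp(2)[OF zs] by linarith
  show ?thesis using upper lower fm unfolding A_def g_def D_def b_def by simp
qed

theorem mainTheorem4:
  fixes l :: "real ^ 'n \<Rightarrow> real" and M m :: real and k :: nat
    and S T :: "'n set"
  assumes "RSM_RSC M m l (2 * k)"
    and "card S \<le> k" and "card T \<le> k"
  shows "(M / m) * fmarg l S T \<ge> (\<Sum>j\<in>T. fmarg l S {j})
    \<and> (\<Sum>j\<in>T. fmarg l S {j}) \<ge> (m / M) * fmarg l S T"
proof (cases "k = 0")
  case True
  hence "T = {}" using assms(3) by simp
  thus ?thesis unfolding fmarg_def by simp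
next
  case False
  have M: "M > 0" and m: "m > 0" using assms(1) unfolding RSM_RSC_def by auto
  define g where "g i = (frechet_derivative l (at (beta l S)) (axis i 1))^2" for i
  define A where "A = (\<Sum>i\<in>T-S. g i)"
  have cS: "card S \<le> 2*k" using assms(2) by simp
  have "card (S \<union> T) \<le> card S + card T" by (rule card_Un_le)
  hence cST: "card (S \<union> T) \<le> 2*k" using assms(2,3) by simp
  have F: "A/(2*M) \<le> fmarg l S T \<and> fmarg l S T \<le> A/(2*m)"
    using bounds[OF assms(1) cS cST] unfolding A_def g_def by simp
  have Fj: "(\<Sum>i\<in>{j}-S. g i)/(2*M) \<le> fmarg l S {j} \<and> fmarg l S {j} \<le> (\<Sum>i\<in>{j}-S. g i)/(2*m)"
    for j
  proof -
    have "card (S \<union> {j}) \<le> card S + card {j}" by (rule card_Un_le)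
    hence "card (S \<union> {j}) \<le> 2*k" using assms(2) False by simp
    thus ?thesis using bounds[OF assms(1) cS] unfolding g_def by simp
  qed
  have sumA: "(\<Sum>j\<in>T. (\<Sum>i\<in>{j}-S. g i)) = A"
  proof -
    have "(\<Sum>j\<in>T. (\<Sum>i\<in>{j}-S. g i)) = (\<Sum>j\<in>T. if j \<notin> S then g j else 0)"
      by (rule sum.cong) (auto simp: insert_Diff_if)
    also have "\<dots> = (\<Sum>j\<in>{j\<in>T. j \<notin> S}. g j)" by (simp add: sum.inter_filter)
    also have "{j\<in>T. j \<notin> S} = T - S" by blast
    finally show ?thesis unfolding A_def .
  qed
  have "(\<Sum>j\<in>T. fmarg l S {j}) \<le> (\<Sum>j\<in>T. (\<Sum>i\<in>{j}-S. g i)/(2*m))"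
    by (rule sum_mono) (use Fj in blast)
  also have "\<dots> = A/(2*m)" using sumA by (simp add: sum_divide_distrib[symmetric])
  finally have s1: "(\<Sum>j\<in>T. fmarg l S {j}) \<le> A/(2*m)" .
  have "(\<Sum>j\<in>T. fmarg l S {j}) \<ge> (\<Sum>j\<in>T. (\<Sum>i\<in>{j}-S. g i)/(2*M))"
    by (rule sum_mono) (use Fj in blast)
  moreover have "(\<Sum>j\<in>T. (\<Sum>i\<in>{j}-S. g i)/(2*M)) = A/(2*M)"
    using sumA by (simp add: sum_divide_distrib[symmetric])
  ultimately have s2: "(\<Sum>j\<in>T. fmarg l S {j}) \<ge> A/(2*M)" by simp
  have "(M/m) * fmarg l S T \<ge> (M/m) * (A/(2*M))"
    using F M m by (intro mult_left_mono) auto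
  moreover have "(M/m) * (A/(2*M)) = A/(2*m)" using M m by (simp add: field_simps)
  moreover have "(m/M) * fmarg l S T \<le> (m/M) * (A/(2*m))"
    using F M m by (intro mult_left_mono) auto
  moreover have "(m/M) * (A/(2*m)) = A/(2*M)" using M m by (simp add: field_simps)
  ultimately show ?thesis using s1 s2 by linarith
qed

end
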